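(* Consider a finite tabular MDP with a unique optimal policy $\pi^*$ in which $d_\rho^\pi(s)\ge d_{\min}>0$ for all states $s$ and all full-support policies $\pi$. Let $\pi_t$ be generated by the discrete EG update $\pi_{t+1}(a|s)=\pi_t(a|s)e^{\eta[U^t_a(s)]_+}/Z^t_s$ with a sufficiently small constant step size $\eta>0$ (as required for $\pi_t\to\pi^*$). Then $\delta_t:=V^*-V(\pi_t)$ satisfies $\delta_t=O(1/t)$.
   Context: A finite MDP $(\mathcal S,\mathcal A,P,r,\gamma,\rho)$ with $r(s,a)\in[0,1]$, $\gamma\in[0,1)$; tabular softmax policies $\pi_\theta(a|s)=e^{\theta(s,a)}/\sum_{a'}e^{\theta(s,a')}$. $V^\pi,Q^\pi$ are the discounted state- and action-value functions, $V(\pi)=\mathbb{E}_{s\sim\rho}V^\pi(s)$, $V^*=V(\pi^* )$, $d_\rho^\pi(s)=(1-\gamma)\sum_{t\ge0}\gamma^t\Pr(s_t=s\mid\rho,\pi)$. $U^t_a(s):=Q^{\pi_t}(s,a)-V^{\pi_t}(s)$, $[x]_+=\max(x,0)$, $Z^t_s:=\sum_{a'}\pi_t(a'|s)e^{\eta[U^t_{a'}(s)]_+}$. *)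

theory Defs
  imports Complex_Main "HOL-Library.Landau_Symbols"
begin

definition is_distr :: "('b::finite \<Rightarrow> real) \<Rightarrow> bool" where
  "is_distr p \<longleftrightarrow> (\<forall>x. p x \<ge> 0) \<and> sum p UNIV = 1"

definition is_policy :: "('s::finite \<Rightarrow> 'a::finite \<Rightarrow> real) \<Rightarrow> bool" where
  "is_policy pol \<longleftrightarrow> (\<forall>s. is_distr (pol s))"

definition full_support :: "('s::finite \<Rightarrow> 'a::finite \<Rightarrow> real) \<Rightarrow> bool" where
  "full_support pol \<longleftrightarrow> is_policy pol \<and> (\<forall>s a. pol s a > 0)"

definition is_mdp :: "('s::finite \<Rightarrow> 'a::finite \<Rightarrow> 's \<Rightarrow> real) \<Rightarrow> ('s \<Rightarrow> 'a \<Rightarrow> real)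
    \<Rightarrow> real \<Rightarrow> ('s \<Rightarrow> real) \<Rightarrow> bool" where
  "is_mdp P r gam rho \<longleftrightarrow> (\<forall>s a. is_distr (P s a)) \<and> (\<forall>s a. 0 \<le> r s a \<and> r s a \<le> 1)
     \<and> 0 \<le> gam \<and> gam < 1 \<and> is_distr rho"

primrec state_dist :: "('s::finite \<Rightarrow> 'a::finite \<Rightarrow> 's \<Rightarrow> real) \<Rightarrow> ('s \<Rightarrow> 'a \<Rightarrow> real)
    \<Rightarrow> ('s \<Rightarrow> real) \<Rightarrow> nat \<Rightarrow> 's \<Rightarrow> real" where
  "state_dist P pol mu 0 = mu"
| "state_dist P pol mu (Suc t) =
     (\<lambda>s'. \<Sum>s\<in>UNIV. state_dist P pol mu t s * (\<Sum>a\<in>UNIV. pol s a * P s a s'))"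

definition Vfun :: "('s::finite \<Rightarrow> 'a::finite \<Rightarrow> 's \<Rightarrow> real) \<Rightarrow> ('s \<Rightarrow> 'a \<Rightarrow> real) \<Rightarrow> real
    \<Rightarrow> ('s \<Rightarrow> 'a \<Rightarrow> real) \<Rightarrow> 's \<Rightarrow> real" where
  "Vfun P r gam pol s = (\<Sum>t. gam ^ t *
      (\<Sum>s'\<in>UNIV. state_dist P pol (\<lambda>x. if x = s then 1 else 0) t s' * (\<Sum>a\<in>UNIV. pol s' a * r s' a)))"

definition Qfun :: "('s::finite \<Rightarrow> 'a::finite \<Rightarrow> 's \<Rightarrow> real) \<Rightarrow> ('s \<Rightarrow> 'a \<Rightarrow> real) \<Rightarrow> real
    \<Rightarrow> ('s \<Rightarrow> 'a \<Rightarrow> real) \<Rightarrow> 's \<Rightarrow> 'a \<Rightarrow> real" where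
  "Qfun P r gam pol s a = r s a + gam * (\<Sum>s'\<in>UNIV. P s a s' * Vfun P r gam pol s')"

definition Vrho :: "('s::finite \<Rightarrow> 'a::finite \<Rightarrow> 's \<Rightarrow> real) \<Rightarrow> ('s \<Rightarrow> 'a \<Rightarrow> real) \<Rightarrow> real
    \<Rightarrow> ('s \<Rightarrow> real) \<Rightarrow> ('s \<Rightarrow> 'a \<Rightarrow> real) \<Rightarrow> real" where
  "Vrho P r gam rho pol = (\<Sum>s\<in>UNIV. rho s * Vfun P r gam pol s)"

definition visit :: "('s::finite \<Rightarrow> 'a::finite \<Rightarrow> 's \<Rightarrow> real) \<Rightarrow> real
    \<Rightarrow> ('s \<Rightarrow> real) \<Rightarrow> ('s \<Rightarrow> 'a \<Rightarrow> real) \<Rightarrow> 's \<Rightarrow> real" where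
  "visit P gam rho pol s = (1 - gam) * (\<Sum>t. gam ^ t * state_dist P pol rho t s)"

definition optimal_policy :: "('s::finite \<Rightarrow> 'a::finite \<Rightarrow> 's \<Rightarrow> real) \<Rightarrow> ('s \<Rightarrow> 'a \<Rightarrow> real)
    \<Rightarrow> real \<Rightarrow> ('s \<Rightarrow> 'a \<Rightarrow> real) \<Rightarrow> bool" where
  "optimal_policy P r gam pol \<longleftrightarrow> is_policy pol \<and>
     (\<forall>pol'. is_policy pol' \<longrightarrow> (\<forall>s. Vfun P r gam pol' s \<le> Vfun P r gam pol s))"

definition adv :: "('s::finite \<Rightarrow> 'a::finite \<Rightarrow> 's \<Rightarrow> real) \<Rightarrow> ('s \<Rightarrow> 'a \<Rightarrow> real) \<Rightarrow> real
    \<Rightarrow> ('s \<Rightarrow> 'a \<Rightarrow> real) \<Rightarrow> 's \<Rightarrow> 'a \<Rightarrow> real" where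
  "adv P r gam pol s a = Qfun P r gam pol s a - Vfun P r gam pol s"

definition eg_step :: "('s::finite \<Rightarrow> 'a::finite \<Rightarrow> 's \<Rightarrow> real) \<Rightarrow> ('s \<Rightarrow> 'a \<Rightarrow> real) \<Rightarrow> real
    \<Rightarrow> real \<Rightarrow> ('s \<Rightarrow> 'a \<Rightarrow> real) \<Rightarrow> 's \<Rightarrow> 'a \<Rightarrow> real" where
  "eg_step P r gam eta pol s a =
     pol s a * exp (eta * max (adv P r gam pol s a) 0) /
     (\<Sum>a'\<in>UNIV. pol s a' * exp (eta * max (adv P r gam pol s a') 0))"

primrec eg_iter :: "('s::finite \<Rightarrow> 'a::finite \<Rightarrow> 's \<Rightarrow> real) \<Rightarrow> ('s \<Rightarrow> 'a \<Rightarrow> real) \<Rightarrow> real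
    \<Rightarrow> real \<Rightarrow> ('s \<Rightarrow> 'a \<Rightarrow> real) \<Rightarrow> nat \<Rightarrow> 's \<Rightarrow> 'a \<Rightarrow> real" where
  "eg_iter P r gam eta pol0 0 = pol0"
| "eg_iter P r gam eta pol0 (Suc t) = eg_step P r gam eta (eg_iter P r gam eta pol0 t)"

definition softmax :: "('s::finite \<Rightarrow> 'a::finite \<Rightarrow> real) \<Rightarrow> 's \<Rightarrow> 'a \<Rightarrow> real" where
  "softmax theta s a = exp (theta s a) / (\<Sum>a'\<in>UNIV. exp (theta s a'))"

end

theory Submission
  imports Defs "HOL-Library.Landau_Symbols"
begin

lemma quad_step:
  fixes y k :: real
  assumes k: "1 \<le> k" and y0: "0 \<le> y" and yk: "y \<le> 1/k"
  shows "y - y^2 \<le> 1/(k+1)"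
proof (cases "y \<le> 1/(k+1)")
  case True
  then show ?thesis using y0 by (simp add: power2_eq_square) (smt (verit) mult_nonneg_nonneg)
next
  case False
  then have y1: "1/(k+1) < y" by simp
  have "1 - y \<le> k/(k+1)"
  proof -
    have "1 - 1/(k+1) = k/(k+1)" using k by (simp add: field_simps)
    then show ?thesis using y1 by linarith
  qed
  moreover have "0 \<le> 1 - y"
  proof -
    have "1/k \<le> 1" using k by simp
    then show ?thesis using yk by linarith
  qed
  ultimately have "y * (1 - y) \<le> (1/k) * (k/(k+1))"
    using yk y0 k by (intro mult_mono) auto
  also have "\<dots> = 1/(k+1)" using k by (simp add: field_simps)
  finally show ?thesis by (simp add: power2_eq_square algebra_simps)
qed

lemma quad_base: fixes y :: real shows "y - y^2 \<le> 1"
proof -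
  have "0 \<le> (y - 1/2)^2" by simp
  then show ?thesis by (simp add: power2_eq_square algebra_simps)
qed

lemma divc: fixes c m X :: real shows "0 < c \<Longrightarrow> 0 < m \<Longrightarrow> c * X \<le> 1/m \<Longrightarrow> X \<le> 1/(c*m)"
  by (simp add: field_simps mult.commute)

lemma rate_lemma:
  fixes d :: "nat \<Rightarrow> real"
  assumes c: "0 < c" and nn: "\<And>t. 0 \<le> d t"
    and rec: "\<And>t. N \<le> t \<Longrightarrow> d (Suc t) \<le> d t - c * (d t)^2"
  shows "d \<in> O(\<lambda>t. 1 / real t)"
proof -
  have cl: "d (N + Suc k) \<le> 1 / (c * real (Suc k))" for k
  proof (induction k)
    case 0
    have "c * (d N - c * (d N)^2) = (c * d N) - (c * d N)^2" by (simp add: power2_eq_square algebra_simps)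
    also have "\<dots> \<le> 1" by (rule quad_base)
    finally have "d N - c * (d N)^2 \<le> 1 / c" using c by (simp add: field_simps)
    then show ?case using rec[of N] by simp
  next
    case (Suc k)
    let ?x = "d (N + Suc k)"
    have "c * (?x - c * ?x^2) = (c * ?x) - (c * ?x)^2" by (simp add: power2_eq_square algebra_simps)
    also have "\<dots> \<le> 1 / (real (Suc k) + 1)"
    proof (rule quad_step)
      show "1 \<le> real (Suc k)" by simp
      show "0 \<le> c * ?x" using c nn by simp
      have "c * ?x \<le> c * (1 / (c * real (Suc k)))" using Suc c by (intro mult_left_mono) auto
      then show "c * ?x \<le> 1 / real (Suc k)" using c by simp
    qed
    finally have "c * (?x - c * ?x^2) \<le> 1 / real (Suc (Suc k))" by simp
    from divc[OF c _ this] have "?x - c * ?x^2 \<le> 1 / (c * real (Suc (Suc k)))" by simp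
    then show ?case using rec[of "N + Suc k"] by simp
  qed
  show ?thesis
  proof (rule bigoI[where c="2/c"])
    show "\<forall>\<^sub>F t in sequentially. norm (d t) \<le> 2 / c * norm (1 / real t)"
    proof (rule eventually_sequentiallyI[where c="2 * N + 2"])
      fix t assume t: "2 * N + 2 \<le> t"
      define k where "k = t - N - 1"
      have tk: "t = N + Suc k" using t unfolding k_def by simp
      have "d t \<le> 1 / (c * real (Suc k))" using cl[of k] tk by simp
      also have "\<dots> \<le> 2 / c * (1 / real t)"
      proof -
        have "real t \<le> 2 * real (Suc k)" using t tk by simp
        then have "c * real t \<le> c * (2 * real (Suc k))" using c by (intro mult_left_mono) auto
        have tp: "0 < real t" using t by simp
        have e1: "2 / (c * (2 * real (Suc k))) = 2 / (2 * (c * real (Suc k)))" by (simp only: mult.left_commute)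
        have "1 / (c * real (Suc k)) = 2 / (c * (2 * real (Suc k)))" unfolding e1 by simp
        also have "\<dots> \<le> 2 / (c * real t)"
          using \<open>c * real t \<le> c * (2 * real (Suc k))\<close> c tp by (intro divide_left_mono) auto
        also have "\<dots> = 2 / c * (1 / real t)" by simp
        finally show ?thesis .
      qed
      finally show "norm (d t) \<le> 2 / c * norm (1 / real t)" using nn[of t] by simp
    qed
  qed
qed


locale mdpl =
  fixes P :: "'s::finite \<Rightarrow> 'a::finite \<Rightarrow> 's \<Rightarrow> real" and r :: "'s \<Rightarrow> 'a \<Rightarrow> real"
    and gam :: real and rho :: "'s \<Rightarrow> real"
  assumes mdp: "is_mdp P r gam rho"
begin

lemma P_nonneg: "P s a s' \<ge> 0" and P_sum: "(\<Sum>s'\<in>UNIV. P s a s') = 1"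
  and r_nonneg: "0 \<le> r s a" and r_le1: "r s a \<le> 1" and gam_nonneg: "0 \<le> gam"
  and gam_lt1: "gam < 1" and rho_distr: "is_distr rho"
  using mdp unfolding is_mdp_def is_distr_def by auto

definition M where "M pol s s' = (\<Sum>a\<in>UNIV. pol s a * P s a s')"
definition rp where "rp pol s = (\<Sum>a\<in>UNIV. pol s a * r s a)"
abbreviation sd where "sd pol mu t \<equiv> state_dist P pol mu t"
definition W where "W pol mu s = (\<Sum>t. gam^t * sd pol mu t s)"
abbreviation V where "V pol \<equiv> Vfun P r gam pol"
abbreviation U where "U pol \<equiv> adv P r gam pol"
abbreviation Q where "Q pol \<equiv> Qfun P r gam pol"

lemma pol_nonneg: "is_policy pol \<Longrightarrow> 0 \<le> pol s a"
  by (simp add: is_policy_def is_distr_def)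
lemma pol_sum: "is_policy pol \<Longrightarrow> (\<Sum>a\<in>UNIV. pol s a) = 1"
  by (simp add: is_policy_def is_distr_def)

lemma M_nonneg: "is_policy pol \<Longrightarrow> 0 \<le> M pol s s'"
  unfolding M_def by (intro sum_nonneg mult_nonneg_nonneg pol_nonneg[of pol] P_nonneg)

lemma M_sum: "is_policy pol \<Longrightarrow> (\<Sum>s'\<in>UNIV. M pol s s') = 1"
proof -
  assume p: "is_policy pol"
  have "(\<Sum>s'\<in>UNIV. M pol s s') = (\<Sum>a\<in>UNIV. \<Sum>s'\<in>UNIV. pol s a * P s a s')"
    unfolding M_def by (rule sum.swap)
  also have "\<dots> = (\<Sum>a\<in>UNIV. pol s a * (\<Sum>s'\<in>UNIV. P s a s'))"
    by (simp only: sum_distrib_left)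
  also have "\<dots> = 1" using pol_sum[OF p] by (simp add: P_sum)
  finally show ?thesis .
qed

lemma rp_nonneg: "is_policy pol \<Longrightarrow> 0 \<le> rp pol s"
  unfolding rp_def by (intro sum_nonneg mult_nonneg_nonneg pol_nonneg[of pol] r_nonneg)

lemma rp_le1: "is_policy pol \<Longrightarrow> rp pol s \<le> 1"
proof -
  assume p: "is_policy pol"
  have "rp pol s \<le> (\<Sum>a\<in>UNIV. pol s a * 1)"
    unfolding rp_def by (intro sum_mono mult_left_mono r_le1 pol_nonneg[OF p])
  then show ?thesis using pol_sum[OF p] by simp
qed

lemma sd_Suc': "sd pol mu (Suc t) s' = (\<Sum>s\<in>UNIV. sd pol mu t s * M pol s s')"
  by (simp add: M_def)

lemma sd_shift: "sd pol mu (Suc t) = sd pol (\<lambda>s'. \<Sum>s\<in>UNIV. mu s * M pol s s') t"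
  by (induction t) (simp_all add: M_def)

lemma sd_nonneg: "is_policy pol \<Longrightarrow> (\<And>s. 0 \<le> mu s) \<Longrightarrow> 0 \<le> sd pol mu t s"
  by (induction t arbitrary: s) (auto simp: M_def[symmetric] intro!: sum_nonneg mult_nonneg_nonneg M_nonneg)

lemma sd_sum: "is_policy pol \<Longrightarrow> (\<Sum>s\<in>UNIV. sd pol mu t s) = (\<Sum>s\<in>UNIV. mu s)"
proof (induction t)
  case 0 then show ?case by simp
next
  case (Suc t)
  have "(\<Sum>s'\<in>UNIV. sd pol mu (Suc t) s') = (\<Sum>s\<in>UNIV. sd pol mu t s * (\<Sum>s'\<in>UNIV. M pol s s'))"
    unfolding sd_Suc' by (subst sum.swap) (simp only: sum_distrib_left)
  also have "\<dots> = (\<Sum>s\<in>UNIV. sd pol mu t s)" using M_sum[OF Suc.prems] by simp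
  finally show ?case using Suc by simp
qed

lemma distr_nonneg: "is_distr mu \<Longrightarrow> 0 \<le> mu s" by (simp add: is_distr_def)
lemma distr_sum: "is_distr mu \<Longrightarrow> (\<Sum>s\<in>UNIV. mu s) = 1" by (simp add: is_distr_def)

lemma sd_nonneg': "is_policy pol \<Longrightarrow> is_distr mu \<Longrightarrow> 0 \<le> sd pol mu t s"
  by (rule sd_nonneg) (auto simp: is_distr_def)

lemma sd_le1: "is_policy pol \<Longrightarrow> is_distr mu \<Longrightarrow> sd pol mu t s \<le> 1"
proof -
  assume p: "is_policy pol" and d: "is_distr mu"
  have nn: "\<And>x. 0 \<le> sd pol mu t x" by (rule sd_nonneg[OF p distr_nonneg[OF d]])
  have "sd pol mu t s \<le> (\<Sum>s\<in>UNIV. sd pol mu t s)"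
    by (rule member_le_sum) (simp_all add: nn)
  also have "\<dots> = 1" by (simp only: sd_sum[OF p] distr_sum[OF d])
  finally show ?thesis .
qed

lemma sd_lin: "sd pol mu t s' = (\<Sum>s\<in>UNIV. mu s * sd pol (\<lambda>x. if x = s then 1 else 0) t s')"
proof (induction t arbitrary: s')
  case 0 then show ?case by (simp add: if_distrib cong: if_cong)
next
  case (Suc t)
  have "sd pol mu (Suc t) s' = (\<Sum>x\<in>UNIV. (\<Sum>s\<in>UNIV. mu s * sd pol (\<lambda>x. if x = s then 1 else 0) t x) * M pol x s')"
    by (simp only: sd_Suc' Suc)
  also have "\<dots> = (\<Sum>x\<in>UNIV. \<Sum>s\<in>UNIV. mu s * sd pol (\<lambda>x. if x = s then 1 else 0) t x * M pol x s')"
    by (simp only: sum_distrib_right)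
  also have "\<dots> = (\<Sum>s\<in>UNIV. \<Sum>x\<in>UNIV. mu s * sd pol (\<lambda>x. if x = s then 1 else 0) t x * M pol x s')"
    by (rule sum.swap)
  also have "\<dots> = (\<Sum>s\<in>UNIV. mu s * (\<Sum>x\<in>UNIV. sd pol (\<lambda>x. if x = s then 1 else 0) t x * M pol x s'))"
    by (simp only: sum_distrib_left mult.assoc)
  also have "\<dots> = (\<Sum>s\<in>UNIV. mu s * sd pol (\<lambda>x. if x = s then 1 else 0) (Suc t) s')"
    by (simp only: sd_Suc')
  finally show ?case .
qed

lemma delta_distr: "is_distr (\<lambda>x. if x = s then 1 else (0::real))"
  by (simp add: is_distr_def)

lemma geo_summable: "(\<And>t. \<bar>f t\<bar> \<le> B) \<Longrightarrow> summable (\<lambda>t. gam^t * f t)"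
proof -
  assume b: "\<And>t. \<bar>f t\<bar> \<le> B"
  show ?thesis
  proof (rule summable_comparison_test')
    show "summable (\<lambda>t. B * gam^t)"
      by (rule summable_mult, rule summable_geometric) (use gam_nonneg gam_lt1 in simp)
    fix n :: nat
    show "norm (gam^n * f n) \<le> B * gam^n"
    proof -
      have g: "0 \<le> gam^n" using gam_nonneg by simp
      have "norm (gam^n * f n) = \<bar>f n\<bar> * gam^n" using g by (simp add: abs_mult)
      also have "\<dots> \<le> B * gam^n" by (rule mult_right_mono[OF b g])
      finally show ?thesis .
    qed
  qed
qed

lemma gam_pow_lim: "(\<lambda>t. gam^t) \<longlonglongrightarrow> 0"
  using gam_nonneg gam_lt1 by (intro LIMSEQ_power_zero) simp

lemma X_bound: "is_policy pol \<Longrightarrow> is_distr mu \<Longrightarrow>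
   0 \<le> (\<Sum>s'\<in>UNIV. sd pol mu t s' * rp pol s') \<and> (\<Sum>s'\<in>UNIV. sd pol mu t s' * rp pol s') \<le> 1"
proof -
  assume p: "is_policy pol" and d: "is_distr mu"
  have "(\<Sum>s'\<in>UNIV. sd pol mu t s' * rp pol s') \<le> (\<Sum>s'\<in>UNIV. sd pol mu t s' * 1)"
    by (intro sum_mono mult_left_mono rp_le1[OF p] sd_nonneg[OF p] distr_nonneg[OF d])
  also have "\<dots> = 1" using sd_sum[OF p] distr_sum[OF d] by simp
  finally have "(\<Sum>s'\<in>UNIV. sd pol mu t s' * rp pol s') \<le> 1" .
  moreover have "0 \<le> (\<Sum>s'\<in>UNIV. sd pol mu t s' * rp pol s')"
    using sd_nonneg[OF p distr_nonneg[OF d]] rp_nonneg[OF p] by (simp add: sum_nonneg)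
  ultimately show ?thesis by simp
qed

lemma X_summable: "is_policy pol \<Longrightarrow> is_distr mu \<Longrightarrow>
   summable (\<lambda>t. gam^t * (\<Sum>s'\<in>UNIV. sd pol mu t s' * rp pol s'))"
proof -
  assume p: "is_policy pol" and d: "is_distr mu"
  show ?thesis
  proof (rule geo_summable[where B=1])
    fix t
    show "\<bar>\<Sum>s'\<in>UNIV. sd pol mu t s' * rp pol s'\<bar> \<le> 1"
      using X_bound[OF p d, of t] by linarith
  qed
qed

lemma V_def': "V pol s = (\<Sum>t. gam^t * (\<Sum>s'\<in>UNIV. sd pol (\<lambda>x. if x = s then 1 else 0) t s' * rp pol s'))"
  by (simp add: Vfun_def rp_def)

lemma V_mix: "is_policy pol \<Longrightarrow>
   (\<Sum>s\<in>UNIV. mu s * V pol s) = (\<Sum>t. gam^t * (\<Sum>s'\<in>UNIV. sd pol mu t s' * rp pol s'))"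
proof -
  assume p: "is_policy pol"
  let ?X = "\<lambda>s t. gam^t * (\<Sum>s'\<in>UNIV. sd pol (\<lambda>x. if x = s then 1 else 0) t s' * rp pol s')"
  have sm: "summable (?X s)" for s by (rule X_summable[OF p delta_distr])
  have "(\<Sum>s\<in>UNIV. mu s * V pol s) = (\<Sum>s\<in>UNIV. \<Sum>t. mu s * ?X s t)"
    unfolding V_def' by (intro sum.cong refl suminf_mult[symmetric] sm)
  also have "\<dots> = (\<Sum>t. \<Sum>s\<in>UNIV. mu s * ?X s t)"
    by (rule suminf_sum[symmetric]) (rule summable_mult[OF sm])
  also have "\<dots> = (\<Sum>t. gam^t * (\<Sum>s'\<in>UNIV. sd pol mu t s' * rp pol s'))"
  proof (rule arg_cong[where f=suminf], rule ext)
    fix t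
    have "(\<Sum>s\<in>UNIV. mu s * ?X s t) = gam^t * (\<Sum>s\<in>UNIV. \<Sum>s'\<in>UNIV. mu s * sd pol (\<lambda>x. if x = s then 1 else 0) t s' * rp pol s')"
      by (simp add: sum_distrib_left mult_ac)
    also have "\<dots> = gam^t * (\<Sum>s'\<in>UNIV. (\<Sum>s\<in>UNIV. mu s * sd pol (\<lambda>x. if x = s then 1 else 0) t s') * rp pol s')"
      by (subst sum.swap) (simp only: sum_distrib_right)
    also have "\<dots> = gam^t * (\<Sum>s'\<in>UNIV. sd pol mu t s' * rp pol s')"
      by (simp add: sd_lin[symmetric])
    finally show "(\<Sum>s\<in>UNIV. mu s * ?X s t) = gam^t * (\<Sum>s'\<in>UNIV. sd pol mu t s' * rp pol s')" .
  qed
  finally show ?thesis .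
qed

lemma V_bounds: "is_policy pol \<Longrightarrow> 0 \<le> V pol s \<and> V pol s \<le> 1/(1-gam)"
proof -
  assume p: "is_policy pol"
  have b: "0 \<le> gam^t * (\<Sum>s'\<in>UNIV. sd pol (\<lambda>x. if x = s then 1 else 0) t s' * rp pol s') \<and>
    gam^t * (\<Sum>s'\<in>UNIV. sd pol (\<lambda>x. if x = s then 1 else 0) t s' * rp pol s') \<le> gam^t" for t
    using X_bound[OF p delta_distr, of s t] gam_nonneg
    by (auto intro: mult_nonneg_nonneg mult_left_le)
  have "V pol s \<le> (\<Sum>t. gam^t)"
    unfolding V_def' by (rule suminf_le) (use b X_summable[OF p delta_distr] gam_nonneg gam_lt1 in auto)
  also have "\<dots> = 1/(1-gam)" using gam_nonneg gam_lt1 by (intro suminf_geometric) simp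
  finally show ?thesis unfolding V_def'
    using b by (auto intro: suminf_nonneg X_summable[OF p delta_distr])
qed


lemma sum_delta_mult: "(\<Sum>x\<in>UNIV. (if x = (s::'z::finite) then 1 else 0) * (g x::real)) = g s"
proof -
  have "(\<Sum>x\<in>UNIV. (if x = s then 1 else 0) * g x) = (\<Sum>x\<in>UNIV. if x = s then g x else 0)"
    by (rule sum.cong) auto
  also have "\<dots> = g s" using sum.delta[of UNIV s g] by simp
  finally show ?thesis .
qed

lemma row_M: "(\<lambda>s'. \<Sum>x\<in>UNIV. (if x = s then 1 else 0) * M pol x s') = M pol s"
proof (rule ext)
  fix s'
  have "(\<Sum>x\<in>UNIV. (if x = s then 1 else 0) * M pol x s') = (\<Sum>x\<in>UNIV. if x = s then M pol x s' else 0)"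
    by (rule sum.cong) auto
  then show "(\<Sum>x\<in>UNIV. (if x = s then 1 else 0) * M pol x s') = M pol s s'" by simp
qed

lemma bellman: "is_policy pol \<Longrightarrow> V pol s = rp pol s + gam * (\<Sum>s'\<in>UNIV. M pol s s' * V pol s')"
proof -
  assume p: "is_policy pol"
  define f where "f = (\<lambda>t. gam^t * (\<Sum>s'\<in>UNIV. sd pol (\<lambda>x. if x = s then 1 else 0) t s' * rp pol s'))"
  have sm: "summable f" unfolding f_def by (rule X_summable[OF p delta_distr])
  have f0: "f 0 = rp pol s" unfolding f_def by (simp add: sum_delta_mult)
  have Mrow: "is_distr (M pol s)"
    unfolding is_distr_def using M_nonneg[OF p] M_sum[OF p] by simp
  have fS: "f (Suc t) = gam * (gam^t * (\<Sum>s'\<in>UNIV. sd pol (M pol s) t s' * rp pol s'))" for t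
    unfolding f_def sd_shift row_M by simp
  have "(\<Sum>t. f (Suc t)) = suminf f - f 0" by (rule suminf_split_head[OF sm])
  moreover have "(\<Sum>t. f (Suc t)) = gam * (\<Sum>s'\<in>UNIV. M pol s s' * V pol s')"
  proof -
    have "(\<Sum>t. f (Suc t)) = (\<Sum>t. gam * (gam^t * (\<Sum>s'\<in>UNIV. sd pol (M pol s) t s' * rp pol s')))"
      by (simp only: fS)
    also have "\<dots> = gam * (\<Sum>t. gam^t * (\<Sum>s'\<in>UNIV. sd pol (M pol s) t s' * rp pol s'))"
      by (rule suminf_mult[OF X_summable[OF p Mrow]])
    also have "\<dots> = gam * (\<Sum>s'\<in>UNIV. M pol s s' * V pol s')"
      by (simp only: V_mix[OF p])
    finally show ?thesis .
  qed
  moreover have "V pol s = suminf f" unfolding f_def V_def' ..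
  ultimately show ?thesis using f0 by simp
qed

lemma Q_mix: "(\<Sum>a\<in>UNIV. pol' s a * Q pol s a) = rp pol' s + gam * (\<Sum>s'\<in>UNIV. M pol' s s' * V pol s')"
proof -
  have "(\<Sum>a\<in>UNIV. pol' s a * Q pol s a) =
     rp pol' s + gam * (\<Sum>a\<in>UNIV. \<Sum>s'\<in>UNIV. pol' s a * P s a s' * V pol s')"
    unfolding Qfun_def rp_def
    by (simp add: distrib_left sum.distrib sum_distrib_left mult_ac)
  also have "(\<Sum>a\<in>UNIV. \<Sum>s'\<in>UNIV. pol' s a * P s a s' * V pol s') = (\<Sum>s'\<in>UNIV. \<Sum>a\<in>UNIV. pol' s a * P s a s' * V pol s')"
    by (rule sum.swap)
  also have "\<dots> = (\<Sum>s'\<in>UNIV. M pol' s s' * V pol s')"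
    unfolding M_def by (simp only: sum_distrib_right)
  finally show ?thesis .
qed

lemma Q_sum: "is_policy pol \<Longrightarrow> (\<Sum>a\<in>UNIV. pol s a * Q pol s a) = V pol s"
  using Q_mix[of pol s pol] bellman[of pol s] by simp

lemma U_sum: "is_policy pol \<Longrightarrow> (\<Sum>a\<in>UNIV. pol s a * U pol s a) = 0"
proof -
  assume p: "is_policy pol"
  have "(\<Sum>a\<in>UNIV. pol s a * U pol s a) = (\<Sum>a\<in>UNIV. pol s a * Q pol s a) - (\<Sum>a\<in>UNIV. pol s a) * V pol s"
    unfolding adv_def by (simp add: right_diff_distrib sum_subtractf sum_distrib_right)
  then show ?thesis using Q_sum[OF p] pol_sum[OF p] by simp
qed

lemma PV_bound: "is_policy pol \<Longrightarrow> 0 \<le> (\<Sum>s'\<in>UNIV. P s a s' * V pol s') \<and> (\<Sum>s'\<in>UNIV. P s a s' * V pol s') \<le> 1/(1-gam)"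
proof -
  assume p: "is_policy pol"
  have "(\<Sum>s'\<in>UNIV. P s a s' * V pol s') \<le> (\<Sum>s'\<in>UNIV. P s a s' * (1/(1-gam)))"
    by (rule sum_mono, rule mult_left_mono) (use V_bounds[OF p] P_nonneg in auto)
  also have "\<dots> = 1/(1-gam)" by (simp only: sum_distrib_right[symmetric] P_sum mult_1)
  finally show ?thesis using V_bounds[OF p] P_nonneg by (simp add: sum_nonneg)
qed

lemma Q_bounds: "is_policy pol \<Longrightarrow> 0 \<le> Q pol s a \<and> Q pol s a \<le> 1/(1-gam)"
proof -
  assume p: "is_policy pol"
  have g: "0 \<le> gam" "gam < 1" by (rule gam_nonneg, rule gam_lt1)
  have "gam * (\<Sum>s'\<in>UNIV. P s a s' * V pol s') \<le> gam * (1/(1-gam))"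
    using PV_bound[OF p] g by (intro mult_left_mono) auto
  moreover have "1 + gam * (1/(1-gam)) = 1/(1-gam)" using g by (simp add: field_simps)
  moreover have "0 \<le> gam * (\<Sum>s'\<in>UNIV. P s a s' * V pol s')" using PV_bound[OF p] g by simp
  ultimately show ?thesis unfolding Qfun_def using r_le1[of s a] r_nonneg[of s a] by linarith
qed

lemma U_bounds: "is_policy pol \<Longrightarrow> U pol s a \<le> 1/(1-gam) \<and> - (1/(1-gam)) \<le> U pol s a"
  using Q_bounds[of pol s a] V_bounds[of pol s] unfolding adv_def by linarith

lemma W_summable: "is_policy pol \<Longrightarrow> is_distr mu \<Longrightarrow> summable (\<lambda>t. gam^t * sd pol mu t s)"
proof -
  assume p: "is_policy pol" and d: "is_distr mu"
  show ?thesis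
  proof (rule geo_summable[where B=1])
    fix t
    show "\<bar>sd pol mu t s\<bar> \<le> 1"
      using sd_le1[OF p d, where t=t and s=s] sd_nonneg'[OF p d, where t=t and s=s] by linarith
  qed
qed

lemma W_nonneg: "is_policy pol \<Longrightarrow> is_distr mu \<Longrightarrow> 0 \<le> W pol mu s"
  unfolding W_def
  by (rule suminf_nonneg[OF W_summable]) (use sd_nonneg' gam_nonneg in auto)

lemma W_le: "is_policy pol \<Longrightarrow> is_distr mu \<Longrightarrow> W pol mu s \<le> 1/(1-gam)"
proof -
  assume p: "is_policy pol" and d: "is_distr mu"
  have "W pol mu s \<le> (\<Sum>t. gam^t)"
    unfolding W_def
  proof (rule suminf_le[OF _ W_summable[OF p d]])
    show "summable (\<lambda>t. gam^t)" using gam_nonneg gam_lt1 by simp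
    fix t
    show "gam^t * sd pol mu t s \<le> gam^t"
      using sd_le1[OF p d, where t=t and s=s] gam_nonneg by (simp add: mult_left_le)
  qed
  also have "\<dots> = 1/(1-gam)" using gam_nonneg gam_lt1 by (intro suminf_geometric) simp
  finally show ?thesis .
qed

lemma W_ge: "is_policy pol \<Longrightarrow> is_distr mu \<Longrightarrow> mu s \<le> W pol mu s"
proof -
  assume p: "is_policy pol" and d: "is_distr mu"
  have "sum (\<lambda>t. gam^t * sd pol mu t s) {0} \<le> W pol mu s"
    unfolding W_def
    by (rule sum_le_suminf[OF W_summable[OF p d]])
       (use sd_nonneg'[OF p d] gam_nonneg in auto)
  then show ?thesis by simp
qed

lemma visit_W: "visit P gam rho pol s = (1 - gam) * W pol rho s"
  by (simp add: visit_def W_def)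


lemma alg: "X = a + g*b - c \<Longrightarrow> (p::real) * X = p*a + (p*g*b - p*c)"
  by (simp add: right_diff_distrib distrib_left mult.assoc)

lemma A_eq: "is_policy q \<Longrightarrow> (\<Sum>a\<in>UNIV. q s a * U pl s a) = rp q s + gam * (\<Sum>s'\<in>UNIV. M q s s' * V pl s') - V pl s"
proof -
  assume p: "is_policy q"
  have "(\<Sum>a\<in>UNIV. q s a * U pl s a) = (\<Sum>a\<in>UNIV. q s a * Q pl s a) - (\<Sum>a\<in>UNIV. q s a) * V pl s"
    unfolding adv_def by (simp add: right_diff_distrib sum_subtractf sum_distrib_right)
  then show ?thesis using Q_mix[of q s pl] pol_sum[OF p] by simp
qed

lemma pdl:
  assumes p: "is_policy pl" and p': "is_policy q" and d: "is_distr mu"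
  shows "(\<Sum>s\<in>UNIV. mu s * (V q s - V pl s)) = (\<Sum>s\<in>UNIV. W q mu s * (\<Sum>a\<in>UNIV. q s a * U pl s a))"
proof -
  define m where "m t s = sd q mu t s" for t s
  define A where "A s = (\<Sum>a\<in>UNIV. q s a * U pl s a)" for s
  define h where "h t = gam^t * (\<Sum>s\<in>UNIV. m t s * V pl s)" for t
  define B where "B = 1/(1-gam)"
  have A': "A s = rp q s + gam * (\<Sum>s'\<in>UNIV. M q s s' * V pl s') - V pl s" for s
    unfolding A_def by (rule A_eq[OF p'])
  have mS: "(\<Sum>s\<in>UNIV. m t s * (\<Sum>s'\<in>UNIV. M q s s' * V pl s')) = (\<Sum>s'\<in>UNIV. m (Suc t) s' * V pl s')" for t
  proof -
    have "(\<Sum>s\<in>UNIV. m t s * (\<Sum>s'\<in>UNIV. M q s s' * V pl s')) = (\<Sum>s\<in>UNIV. \<Sum>s'\<in>UNIV. m t s * M q s s' * V pl s')"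
      by (simp only: sum_distrib_left mult.assoc)
    also have "\<dots> = (\<Sum>s'\<in>UNIV. \<Sum>s\<in>UNIV. m t s * M q s s' * V pl s')" by (rule sum.swap)
    also have "\<dots> = (\<Sum>s'\<in>UNIV. m (Suc t) s' * V pl s')"
      unfolding m_def sd_Suc' by (simp only: sum_distrib_right)
    finally show ?thesis .
  qed
  have tm: "gam^t * (\<Sum>s\<in>UNIV. m t s * A s) = gam^t * (\<Sum>s\<in>UNIV. m t s * rp q s) + (h (Suc t) - h t)" for t
  proof -
    have "(\<Sum>s\<in>UNIV. m t s * A s) = (\<Sum>s\<in>UNIV. m t s * rp q s) + gam * (\<Sum>s\<in>UNIV. m t s * (\<Sum>s'\<in>UNIV. M q s s' * V pl s')) - (\<Sum>s\<in>UNIV. m t s * V pl s)"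
      unfolding A' by (simp add: algebra_simps sum.distrib sum_subtractf sum_distrib_left)
    also have "\<dots> = (\<Sum>s\<in>UNIV. m t s * rp q s) + gam * (\<Sum>s'\<in>UNIV. m (Suc t) s' * V pl s') - (\<Sum>s\<in>UNIV. m t s * V pl s)"
      by (simp only: mS)
    finally have E: "(\<Sum>s\<in>UNIV. m t s * A s) = (\<Sum>s\<in>UNIV. m t s * rp q s) + gam * (\<Sum>s'\<in>UNIV. m (Suc t) s' * V pl s') - (\<Sum>s\<in>UNIV. m t s * V pl s)" .
    show ?thesis unfolding h_def power_Suc2 by (rule alg[OF E])
  qed
  have h0: "h 0 = (\<Sum>s\<in>UNIV. mu s * V pl s)" unfolding h_def m_def by simp
  have hb: "\<bar>\<Sum>s\<in>UNIV. m t s * V pl s\<bar> \<le> B" for t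
  proof -
    have mn: "0 \<le> m t s" for s unfolding m_def by (rule sd_nonneg'[OF p' d])
    have vb: "V pl s \<le> B" "0 \<le> V pl s" for s unfolding B_def using V_bounds[OF p, of s] by auto
    have "(\<Sum>s\<in>UNIV. m t s * V pl s) \<le> (\<Sum>s\<in>UNIV. m t s * B)"
      by (rule sum_mono, rule mult_left_mono[OF vb(1) mn])
    also have "\<dots> = (\<Sum>s\<in>UNIV. m t s) * B" by (rule sum_distrib_right[symmetric])
    also have "\<dots> = B" unfolding m_def sd_sum[OF p'] distr_sum[OF d] by simp
    finally have "(\<Sum>s\<in>UNIV. m t s * V pl s) \<le> B" .
    moreover have "0 \<le> (\<Sum>s\<in>UNIV. m t s * V pl s)"
      by (rule sum_nonneg, rule mult_nonneg_nonneg[OF mn vb(2)])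
    ultimately show ?thesis by linarith
  qed
  have habs: "\<bar>h n\<bar> \<le> B * gam^n" for n
  proof -
    have g: "0 \<le> gam^n" using gam_nonneg by simp
    have "\<bar>h n\<bar> = gam^n * \<bar>\<Sum>s\<in>UNIV. m n s * V pl s\<bar>" unfolding h_def using g by (simp add: abs_mult)
    also have "\<dots> \<le> gam^n * B" by (rule mult_left_mono[OF hb g])
    finally show ?thesis by (simp add: mult.commute)
  qed
  have hlim: "h \<longlonglongrightarrow> 0"
  proof (rule tendsto_sandwich[where f="\<lambda>t. - (B * gam^t)" and h="\<lambda>t. B * gam^t"])
    have "- (B * gam ^ n) \<le> h n \<and> h n \<le> B * gam ^ n" for n
      using habs[of n] by (simp add: abs_le_iff)
    then show "\<forall>\<^sub>F n in sequentially. - (B * gam ^ n) \<le> h n"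
      and "\<forall>\<^sub>F n in sequentially. h n \<le> B * gam ^ n" by auto
    show "(\<lambda>t. - (B * gam ^ t)) \<longlonglongrightarrow> 0" using tendsto_minus[OF tendsto_mult_right_zero[OF gam_pow_lim, of B]] by simp
    show "(\<lambda>t. B * gam ^ t) \<longlonglongrightarrow> 0" using tendsto_mult_right_zero[OF gam_pow_lim, of B] by simp
  qed
  have s1: "(\<lambda>t. gam^t * (\<Sum>s\<in>UNIV. m t s * rp q s)) sums (\<Sum>s\<in>UNIV. mu s * V q s)"
    unfolding m_def V_mix[OF p'] by (rule summable_sums[OF X_summable[OF p' d]])
  have s2: "(\<lambda>t. h (Suc t) - h t) sums (0 - h 0)" by (rule telescope_sums[OF hlim])
  have s3: "(\<lambda>t. gam^t * (\<Sum>s\<in>UNIV. m t s * A s)) sums ((\<Sum>s\<in>UNIV. mu s * V q s) - (\<Sum>s\<in>UNIV. mu s * V pl s))"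
    unfolding tm using sums_add[OF s1 s2] h0 by simp
  have "(\<Sum>s\<in>UNIV. W q mu s * A s) = (\<Sum>s\<in>UNIV. \<Sum>t. gam^t * m t s * A s)"
    unfolding W_def m_def by (rule sum.cong[OF refl], rule suminf_mult2[OF W_summable[OF p' d]])
  also have "\<dots> = (\<Sum>t. \<Sum>s\<in>UNIV. gam^t * m t s * A s)"
    by (rule suminf_sum[symmetric], rule summable_mult2) (unfold m_def, rule W_summable[OF p' d])
  also have "\<dots> = (\<Sum>t. gam^t * (\<Sum>s\<in>UNIV. m t s * A s))"
    by (simp only: sum_distrib_left mult.assoc)
  also have "\<dots> = (\<Sum>s\<in>UNIV. mu s * V q s) - (\<Sum>s\<in>UNIV. mu s * V pl s)"
    by (rule sums_unique[OF s3, symmetric])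
  finally show ?thesis unfolding A_def by (simp add: right_diff_distrib sum_subtractf)
qed


definition md :: "('s \<Rightarrow> 'a \<Rightarrow> real) \<Rightarrow> 's \<Rightarrow> 'a \<Rightarrow> 's \<Rightarrow> 'a \<Rightarrow> real" where
  "md ps s a = (\<lambda>x b. if x = s then (if b = a then 1 else 0) else ps x b)"

lemma md_policy: "is_policy ps \<Longrightarrow> is_policy (md ps s a)"
proof -
  assume p: "is_policy ps"
  have "is_distr (md ps s a x)" for x
  proof (cases "x = s")
    case True
    then show ?thesis unfolding md_def is_distr_def by simp
  next
    case False
    then show ?thesis unfolding md_def using p by (simp add: is_policy_def)
  qed
  then show ?thesis unfolding is_policy_def by simp
qed

lemma md_pdl:
  assumes p: "is_policy ps"
  shows "V (md ps s a) x - V ps x = W (md ps s a) (\<lambda>y. if y = x then 1 else 0) s * U ps s a"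
proof -
  let ?q = "md ps s a"
  let ?mu = "\<lambda>y::'s. if y = x then 1 else (0::real)"
  have A: "(\<Sum>b\<in>UNIV. ?q y b * U ps y b) = (if y = s then 1 else 0) * U ps s a" for y
  proof (cases "y = s")
    case True
    then have "(\<Sum>b\<in>UNIV. ?q y b * U ps y b) = (\<Sum>b\<in>UNIV. (if b = a then 1 else 0) * U ps s b)"
      unfolding md_def by simp
    also have "\<dots> = U ps s a" by (rule sum_delta_mult)
    finally show ?thesis using True by simp
  next
    case False
    then have "(\<Sum>b\<in>UNIV. ?q y b * U ps y b) = (\<Sum>b\<in>UNIV. ps y b * U ps y b)"
      unfolding md_def by simp
    also have "\<dots> = 0" by (rule U_sum[OF p])
    finally show ?thesis using False by simp
  qed
  have "(\<Sum>y\<in>UNIV. ?mu y * (V ?q y - V ps y)) = (\<Sum>y\<in>UNIV. W ?q ?mu y * (\<Sum>b\<in>UNIV. ?q y b * U ps y b))"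
    by (rule pdl[OF p md_policy[OF p] delta_distr])
  also have "\<dots> = (\<Sum>y\<in>UNIV. (if y = s then 1 else 0) * (W ?q ?mu y * U ps s a))"
    unfolding A by (simp only: mult_ac)
  also have "\<dots> = W ?q ?mu s * U ps s a" by (rule sum_delta_mult)
  finally show ?thesis by (simp only: sum_delta_mult)
qed

lemma pistar_struct:
  assumes opt: "optimal_policy P r gam ps" and uniq: "\<And>pol. optimal_policy P r gam pol \<Longrightarrow> pol = ps"
  shows "\<exists>astar. \<forall>s. (\<forall>a. ps s a = (if a = astar s then 1 else 0)) \<and> U ps s (astar s) = 0
            \<and> (\<forall>b. b \<noteq> astar s \<longrightarrow> U ps s b < 0)"
proof -
  have p: "is_policy ps" using opt unfolding optimal_policy_def by auto
  have le: "V pol x \<le> V ps x" if "is_policy pol" for pol x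
    using opt that unfolding optimal_policy_def by auto
  have Ule: "U ps s a \<le> 0" for s a
  proof -
    have "W (md ps s a) (\<lambda>y. if y = s then 1 else 0) s * U ps s a \<le> 0"
      using md_pdl[OF p, of s a s] le[OF md_policy[OF p], of s a s] by simp
    moreover have "(\<lambda>y. if y = s then 1 else (0::real)) s \<le> W (md ps s a) (\<lambda>y. if y = s then 1 else 0) s"
      by (rule W_ge[OF md_policy[OF p] delta_distr])
    then have "1 \<le> W (md ps s a) (\<lambda>y. if y = s then 1 else 0) s" by simp
    ultimately show ?thesis
    proof (rule_tac ccontr)
      assume h1: "W (md ps s a) (\<lambda>y. if y = s then 1 else 0) s * U ps s a \<le> 0"
        and h2: "1 \<le> W (md ps s a) (\<lambda>y. if y = s then 1 else 0) s" and h3: "\<not> U ps s a \<le> 0"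
      have "0 < W (md ps s a) (\<lambda>y. if y = s then 1 else 0) s * U ps s a"
        using h2 h3 by (intro mult_pos_pos) auto
      then show False using h1 by simp
    qed
  qed
  have Ueq: "ps s = (\<lambda>b. if b = a then 1 else 0)" if "U ps s a = 0" for s a
  proof -
    have "V (md ps s a) x = V ps x" for x using md_pdl[OF p, of s a x] that by simp
    then have "optimal_policy P r gam (md ps s a)"
      unfolding optimal_policy_def using md_policy[OF p] le by auto
    then have "md ps s a = ps" by (rule uniq)
    then have "md ps s a s = ps s" by simp
    then show ?thesis unfolding md_def by simp
  qed
  have ex: "\<exists>a. U ps s a = 0" for s
  proof (rule ccontr)
    assume nz: "\<not> (\<exists>a. U ps s a = 0)"
    have neg: "U ps s a < 0" for a
    proof -
      have "U ps s a \<noteq> 0" using nz by blast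
      then show ?thesis using Ule[of s a] by linarith
    qed
    have "(\<Sum>a\<in>UNIV. ps s a * (- U ps s a)) = 0"
      using U_sum[OF p, of s] by (simp add: sum_negf)
    moreover have "\<forall>a\<in>UNIV. 0 \<le> ps s a * (- U ps s a)"
      using pol_nonneg[OF p] neg by (simp add: mult_nonneg_nonpos less_imp_le)
    ultimately have "\<forall>a\<in>UNIV. ps s a * (- U ps s a) = 0"
      using sum_nonneg_eq_0_iff[of "UNIV::'a set" "\<lambda>a. ps s a * - U ps s a"] by simp
    then have "\<forall>a. ps s a = 0" using neg by (metis UNIV_I add.inverse_neutral mult_eq_0_iff neg_0_equal_iff_equal order_less_irrefl)
    then show False using pol_sum[OF p, of s] by simp
  qed
  define astar where "astar s = (SOME a. U ps s a = 0)" for s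
  have as0: "U ps s (astar s) = 0" for s unfolding astar_def using ex[of s] by (rule someI_ex)
  show ?thesis
  proof (intro exI allI conjI impI)
    fix s a show "ps s a = (if a = astar s then 1 else 0)" using Ueq[OF as0[of s]] by simp
  next
    fix s show "U ps s (astar s) = 0" by (rule as0)
  next
    fix s b assume "b \<noteq> astar s"
    show "U ps s b < 0"
    proof (rule ccontr)
      assume "\<not> U ps s b < 0"
      then have "U ps s b = 0" using Ule[of s b] by simp
      then have "ps s b = 1" using Ueq by simp
      moreover have "ps s b = 0" using Ueq[OF as0[of s]] \<open>b \<noteq> astar s\<close> by simp
      ultimately show False by simp
    qed
  qed
qed

lemma fs_policy: "full_support pol \<Longrightarrow> is_policy pol" by (simp add: full_support_def)
lemma fs_pos: "full_support pol \<Longrightarrow> 0 < pol s a" by (simp add: full_support_def)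

lemma Z_pos: "full_support pol \<Longrightarrow> 0 < (\<Sum>a'\<in>UNIV. pol s a' * exp (eta * max (U pol s a') 0))"
  by (rule sum_pos) (auto intro: mult_pos_pos fs_pos)

lemma step_fs: "full_support pol \<Longrightarrow> full_support (eg_step P r gam eta pol)"
proof -
  assume f: "full_support pol"
  let ?Z = "\<lambda>s. (\<Sum>a'\<in>UNIV. pol s a' * exp (eta * max (U pol s a') 0))"
  have pos: "0 < eg_step P r gam eta pol s a" for s a
    unfolding eg_step_def using Z_pos[OF f] fs_pos[OF f] by (intro divide_pos_pos mult_pos_pos) auto
  have sm: "(\<Sum>a\<in>UNIV. eg_step P r gam eta pol s a) = 1" for s
  proof -
    have "(\<Sum>a\<in>UNIV. eg_step P r gam eta pol s a) = ?Z s / ?Z s"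
      unfolding eg_step_def by (rule sum_divide_distrib[symmetric])
    then show ?thesis using Z_pos[OF f, of s eta] by simp
  qed
  show ?thesis unfolding full_support_def is_policy_def is_distr_def
    using pos sm by (auto intro: less_imp_le)
qed

lemma softmax_fs: "full_support (softmax th)"
proof -
  have Zp: "0 < (\<Sum>a'\<in>UNIV. exp (th s a'))" for s by (rule sum_pos) auto
  have pos: "0 < softmax th s a" for s a unfolding softmax_def using Zp by simp
  have "(\<Sum>a\<in>UNIV. softmax th s a) = 1" for s
    unfolding softmax_def using Zp[of s] by (simp add: sum_divide_distrib[symmetric])
  then show ?thesis unfolding full_support_def is_policy_def is_distr_def
    using pos by (auto intro: less_imp_le)
qed

lemma iter_fs: "full_support pol0 \<Longrightarrow> full_support (eg_iter P r gam eta pol0 t)"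
  by (induction t) (auto intro: step_fs)


lemma gam_B: "0 < 1/(1-gam)" using gam_lt1 by simp

lemma step_ineq:
  assumes f: "full_support pol" and e: "0 < eta"
  shows "0 \<le> (\<Sum>a\<in>UNIV. eg_step P r gam eta pol s a * U pol s a)"
    and "eta * pol s b * (max (U pol s b) 0)^2 / exp (eta * (1/(1-gam))) \<le> (\<Sum>a\<in>UNIV. eg_step P r gam eta pol s a * U pol s a)"
proof -
  have p: "is_policy pol" by (rule fs_policy[OF f])
  define ex where "ex a = exp (eta * max (U pol s a) 0)" for a
  define Z where "Z = (\<Sum>a\<in>UNIV. pol s a * ex a)"
  define E where "E = exp (eta * (1/(1-gam)))"
  have Zp: "0 < Z" unfolding Z_def ex_def by (rule Z_pos[OF f])
  have s1: "(\<Sum>a\<in>UNIV. eg_step P r gam eta pol s a * U pol s a) = (\<Sum>a\<in>UNIV. pol s a * ex a * U pol s a) / Z"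
    unfolding eg_step_def ex_def Z_def by (simp add: sum_divide_distrib)
  have s2: "(\<Sum>a\<in>UNIV. pol s a * ex a * U pol s a) = (\<Sum>a\<in>UNIV. pol s a * (ex a - 1) * U pol s a)"
  proof -
    have "(\<Sum>a\<in>UNIV. pol s a * (ex a - 1) * U pol s a) = (\<Sum>a\<in>UNIV. pol s a * ex a * U pol s a) - (\<Sum>a\<in>UNIV. pol s a * U pol s a)"
      by (simp add: algebra_simps sum_subtractf)
    then show ?thesis using U_sum[OF p, of s] by simp
  qed
  have tb: "eta * pol s a * (max (U pol s a) 0)^2 \<le> pol s a * (ex a - 1) * U pol s a" for a
  proof (cases "U pol s a \<le> 0")
    case True
    then show ?thesis unfolding ex_def by simp
  next
    case False
    then have u: "0 < U pol s a" by simp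
    have "1 + eta * U pol s a \<le> ex a" unfolding ex_def using u exp_ge_add_one_self[of "eta * U pol s a"] by simp
    then have "eta * U pol s a * U pol s a \<le> (ex a - 1) * U pol s a"
      using u by (intro mult_right_mono) auto
    then have "pol s a * (eta * U pol s a * U pol s a) \<le> pol s a * ((ex a - 1) * U pol s a)"
      using pol_nonneg[OF p, of s a] by (intro mult_left_mono) auto
    then show ?thesis using u by (simp add: power2_eq_square mult_ac)
  qed
  have tn: "0 \<le> eta * pol s a * (max (U pol s a) 0)^2" for a
    using e pol_nonneg[OF p, of s a] by simp
  define S where "S = (\<Sum>a\<in>UNIV. pol s a * (ex a - 1) * U pol s a)"
  have Sb: "eta * pol s b * (max (U pol s b) 0)^2 \<le> S"
  proof -
    have "pol s b * (ex b - 1) * U pol s b \<le> S"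
    proof -
      have tnn: "0 \<le> pol s a * (ex a - 1) * U pol s a" for a using tb[of a] tn[of a] by linarith
      show ?thesis unfolding S_def by (rule member_le_sum) (simp_all only: tnn UNIV_I finite)
    qed
    then show ?thesis using tb[of b] by linarith
  qed
  have S0: "0 \<le> S" using Sb tn[of b] by linarith
  have ZE: "Z \<le> E"
  proof -
    have "ex a \<le> E" for a
    proof -
      have "max (U pol s a) 0 \<le> 1/(1-gam)" using U_bounds[OF p, of s a] gam_B by simp
      then have "eta * max (U pol s a) 0 \<le> eta * (1/(1-gam))" using e by (intro mult_left_mono) auto
      then show ?thesis unfolding ex_def E_def by simp
    qed
    then have "Z \<le> (\<Sum>a\<in>UNIV. pol s a * E)"
      unfolding Z_def by (intro sum_mono mult_left_mono) (auto intro: pol_nonneg[OF p])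
    also have "\<dots> = E" using pol_sum[OF p, of s] by (simp add: sum_distrib_right[symmetric])
    finally show ?thesis .
  qed
  have main: "(\<Sum>a\<in>UNIV. eg_step P r gam eta pol s a * U pol s a) = S / Z" unfolding S_def s1 s2 ..
  show "0 \<le> (\<Sum>a\<in>UNIV. eg_step P r gam eta pol s a * U pol s a)"
    unfolding main using S0 Zp by simp
  have "S / E \<le> S / Z" using S0 Zp ZE by (intro divide_left_mono) auto
  moreover have "eta * pol s b * (max (U pol s b) 0)^2 / E \<le> S / E"
    using Sb unfolding E_def by (intro divide_right_mono) auto
  ultimately show "eta * pol s b * (max (U pol s b) 0)^2 / exp (eta * (1/(1-gam))) \<le> (\<Sum>a\<in>UNIV. eg_step P r gam eta pol s a * U pol s a)"
    unfolding main E_def by linarith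
qed

lemma step_ratio:
  "eg_step P r gam eta pol s b * (pol s a * exp (eta * max (U pol s a) 0)) =
   eg_step P r gam eta pol s a * (pol s b * exp (eta * max (U pol s b) 0))"
  unfolding eg_step_def by (simp add: mult_ac)


lemma W_ge_dmin:
  assumes p: "is_policy pol" and v: "dmin \<le> visit P gam rho pol s"
  shows "dmin \<le> W pol rho s"
proof -
  have w0: "0 \<le> W pol rho s" by (rule W_nonneg[OF p rho_distr])
  have "(1 - gam) * W pol rho s \<le> 1 * W pol rho s"
    using gam_nonneg w0 by (intro mult_right_mono) auto
  then show ?thesis using v visit_W[of pol s] by simp
qed

lemma Vrho_eq: "Vrho P r gam rho pol = (\<Sum>s\<in>UNIV. rho s * V pol s)"
  by (simp add: Vrho_def)

lemma cancelK: "(K::real) \<noteq> 0 \<Longrightarrow> a / K * (K * S) = a * S"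
  by simp

lemma conv_main:
  assumes opt: "optimal_policy P r gam ps" and uniq: "\<And>pol. optimal_policy P r gam pol \<Longrightarrow> pol = ps"
    and dpos: "0 < dmin" and cover: "\<And>pol s. full_support pol \<Longrightarrow> dmin \<le> visit P gam rho pol s"
    and e: "0 < eta" and f0: "full_support pol0"
  shows "\<exists>c N. 0 < c \<and> (\<forall>t. 0 \<le> Vrho P r gam rho ps - Vrho P r gam rho (eg_iter P r gam eta pol0 t)) \<and>
     (\<forall>t. N \<le> t \<longrightarrow> Vrho P r gam rho ps - Vrho P r gam rho (eg_iter P r gam eta pol0 (Suc t))
        \<le> (Vrho P r gam rho ps - Vrho P r gam rho (eg_iter P r gam eta pol0 t))
           - c * (Vrho P r gam rho ps - Vrho P r gam rho (eg_iter P r gam eta pol0 t))^2)"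
proof -
  define pt where "pt t = eg_iter P r gam eta pol0 t" for t
  have fs: "full_support (pt t)" for t unfolding pt_def by (rule iter_fs[OF f0])
  have pp: "is_policy (pt t)" for t by (rule fs_policy[OF fs])
  have ptS: "pt (Suc t) = eg_step P r gam eta (pt t)" for t unfolding pt_def by simp
  have psp: "is_policy ps" using opt unfolding optimal_policy_def by auto
  have Vle: "V (pt t) x \<le> V ps x" for t x using opt pp unfolding optimal_policy_def by auto
  define Af where "Af t s = (\<Sum>a\<in>UNIV. pt (Suc t) s a * U (pt t) s a)" for t s
  define E where "E = exp (eta * (1/(1-gam)))"
  have Ep: "0 < E" unfolding E_def by simp
  have Af0: "0 \<le> Af t s" for t s unfolding Af_def ptS by (rule step_ineq(1)[OF fs e])
  have Aflow: "eta * pt t s b * (max (U (pt t) s b) 0)^2 / E \<le> Af t s" for t s b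
    unfolding Af_def ptS E_def by (rule step_ineq(2)[OF fs e])
  have mono: "V (pt t) x \<le> V (pt (Suc t)) x" for t x
  proof -
    have "(\<Sum>y\<in>UNIV. (if y = x then 1 else 0) * (V (pt (Suc t)) y - V (pt t) y))
        = (\<Sum>y\<in>UNIV. W (pt (Suc t)) (\<lambda>y. if y = x then 1 else 0) y * Af t y)"
      unfolding Af_def by (rule pdl[OF pp pp delta_distr])
    also have "\<dots> \<ge> 0"
      by (rule sum_nonneg, rule mult_nonneg_nonneg[OF W_nonneg[OF pp delta_distr] Af0])
    finally show ?thesis by (simp only: sum_delta_mult)
  qed
  have impr: "(\<Sum>s\<in>UNIV. dmin * Af t s) \<le> Vrho P r gam rho (pt (Suc t)) - Vrho P r gam rho (pt t)" for t
  proof -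
    have "Vrho P r gam rho (pt (Suc t)) - Vrho P r gam rho (pt t) = (\<Sum>s\<in>UNIV. rho s * (V (pt (Suc t)) s - V (pt t) s))"
      unfolding Vrho_eq by (simp add: right_diff_distrib sum_subtractf)
    also have "\<dots> = (\<Sum>s\<in>UNIV. W (pt (Suc t)) rho s * Af t s)"
      unfolding Af_def by (rule pdl[OF pp pp rho_distr])
    finally have eq: "Vrho P r gam rho (pt (Suc t)) - Vrho P r gam rho (pt t) = (\<Sum>s\<in>UNIV. W (pt (Suc t)) rho s * Af t s)" .
    have "(\<Sum>s\<in>UNIV. dmin * Af t s) \<le> (\<Sum>s\<in>UNIV. W (pt (Suc t)) rho s * Af t s)"
      by (rule sum_mono, rule mult_right_mono[OF W_ge_dmin[OF pp cover[OF fs]] Af0])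
    then show ?thesis using eq by simp
  qed
  have "\<exists>L. (\<lambda>t. V (pt t) x) \<longlonglongrightarrow> L" for x
  proof -
    have inc: "incseq (\<lambda>t. V (pt t) x)" by (rule incseq_SucI) (rule mono)
    have bd: "\<forall>i. V (pt i) x \<le> V ps x" using Vle by simp
    obtain L where "(\<lambda>t. V (pt t) x) \<longlonglongrightarrow> L" by (rule incseq_convergent[OF inc bd])
    then show ?thesis by (rule exI)
  qed
  then obtain L where VL: "\<And>x. (\<lambda>t. V (pt t) x) \<longlonglongrightarrow> L x" by metis
  define UL where "UL s a = r s a + gam * (\<Sum>s'\<in>UNIV. P s a s' * L s') - L s" for s a
  have ULlim: "(\<lambda>t. U (pt t) s a) \<longlonglongrightarrow> UL s a" for s a
    unfolding adv_def Qfun_def UL_def by (intro tendsto_intros VL)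
  have Vrholim: "(\<lambda>t. Vrho P r gam rho (pt t)) \<longlonglongrightarrow> (\<Sum>s\<in>UNIV. rho s * L s)"
    unfolding Vrho_eq by (intro tendsto_intros VL)
  have difflim: "(\<lambda>t. Vrho P r gam rho (pt (Suc t)) - Vrho P r gam rho (pt t)) \<longlonglongrightarrow> 0"
    using tendsto_diff[OF LIMSEQ_Suc[OF Vrholim] Vrholim] by simp
  have key0: "(\<lambda>t. pt t s b * (max (U (pt t) s b) 0)^2) \<longlonglongrightarrow> 0" for s b
  proof (rule tendsto_sandwich[where f="\<lambda>t. 0" and h="\<lambda>t. (E / (eta * dmin)) * (Vrho P r gam rho (pt (Suc t)) - Vrho P r gam rho (pt t))"])
    show "\<forall>\<^sub>F t in sequentially. 0 \<le> pt t s b * (max (U (pt t) s b) 0)^2"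
    proof (rule always_eventually, rule allI)
      fix t
      have "0 < pt t s b" by (rule fs_pos[OF fs])
      then show "0 \<le> pt t s b * (max (U (pt t) s b) 0)^2" by simp
    qed
    have "pt t s b * (max (U (pt t) s b) 0)^2 \<le> (E / (eta * dmin)) * (Vrho P r gam rho (pt (Suc t)) - Vrho P r gam rho (pt t))" for t
    proof -
      have "dmin * Af t s \<le> (\<Sum>s\<in>UNIV. dmin * Af t s)"
        by (rule member_le_sum) (simp_all add: Af0 dpos less_imp_le)
      also have "\<dots> \<le> Vrho P r gam rho (pt (Suc t)) - Vrho P r gam rho (pt t)" by (rule impr)
      finally have h1: "dmin * Af t s \<le> Vrho P r gam rho (pt (Suc t)) - Vrho P r gam rho (pt t)" .
      have "dmin * (eta * pt t s b * (max (U (pt t) s b) 0)^2 / E) \<le> dmin * Af t s"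
        using Aflow dpos by (intro mult_left_mono) auto
      then have "(eta * dmin / E) * (pt t s b * (max (U (pt t) s b) 0)^2) \<le> Vrho P r gam rho (pt (Suc t)) - Vrho P r gam rho (pt t)"
        using h1 by (simp add: mult_ac)
      then show ?thesis using e dpos Ep by (simp add: field_simps)
    qed
    then show "\<forall>\<^sub>F t in sequentially. pt t s b * (max (U (pt t) s b) 0)^2 \<le> (E / (eta * dmin)) * (Vrho P r gam rho (pt (Suc t)) - Vrho P r gam rho (pt t))"
      by simp
    show "(\<lambda>t. 0::real) \<longlonglongrightarrow> 0" by simp
    show "(\<lambda>t. (E / (eta * dmin)) * (Vrho P r gam rho (pt (Suc t)) - Vrho P r gam rho (pt t))) \<longlonglongrightarrow> 0"
      by (rule tendsto_mult_right_zero[OF difflim])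
  qed
  have key1: "(\<lambda>t. pt t s b) \<longlonglongrightarrow> 0" if pos: "0 < UL s b" for s b
  proof -
    have ml: "(\<lambda>t. (max (U (pt t) s b) 0)^2) \<longlonglongrightarrow> (max (UL s b) 0)^2"
      by (intro tendsto_intros ULlim)
    have nz: "(max (UL s b) 0)^2 \<noteq> 0" using pos by simp
    have lim1: "(\<lambda>t. pt t s b * (max (U (pt t) s b) 0)^2 / (max (U (pt t) s b) 0)^2) \<longlonglongrightarrow> 0 / (max (UL s b) 0)^2"
      by (rule tendsto_divide[OF key0 ml nz])
    have ev: "\<forall>\<^sub>F t in sequentially. 0 < (max (U (pt t) s b) 0)^2"
      using order_tendstoD(1)[OF ml, of 0] nz by (simp only: zero_less_power2) simp
    show ?thesis
    proof (rule Lim_transform_eventually)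
      show "(\<lambda>t. pt t s b * (max (U (pt t) s b) 0)^2 / (max (U (pt t) s b) 0)^2) \<longlonglongrightarrow> 0" using lim1 by simp
      show "\<forall>\<^sub>F t in sequentially. pt t s b * (max (U (pt t) s b) 0)^2 / (max (U (pt t) s b) 0)^2 = pt t s b"
        using ev by eventually_elim simp
    qed
  qed
  have key2: "UL s a \<le> 0" for s a
  proof (rule ccontr)
    assume "\<not> UL s a \<le> 0"
    then have pa: "0 < UL s a" by simp
    have allb: "(\<lambda>t. pt t s b) \<longlonglongrightarrow> 0" for b
    proof (cases "0 < UL s b")
      case True
      then show ?thesis by (rule key1)
    next
      case False
      have ev1: "\<forall>\<^sub>F t in sequentially. UL s a / 2 < U (pt t) s a"
        by (rule order_tendstoD(1)[OF ULlim]) (use pa in simp)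
      have ev2: "\<forall>\<^sub>F t in sequentially. U (pt t) s b < UL s a / 2"
        by (rule order_tendstoD(2)[OF ULlim]) (use pa False in simp)
      obtain N where N: "\<And>t. N \<le> t \<Longrightarrow> UL s a / 2 < U (pt t) s a \<and> U (pt t) s b < UL s a / 2"
        using eventually_conj[OF ev1 ev2] unfolding eventually_sequentially by blast
      define q where "q t = pt t s b / pt t s a" for t
      have qdec: "q (Suc t) \<le> q t" if tN: "N \<le> t" for t
      proof -
        define ea where "ea = exp (eta * max (U (pt t) s a) 0)"
        define eb where "eb = exp (eta * max (U (pt t) s b) 0)"
        have "max (U (pt t) s b) 0 \<le> max (U (pt t) s a) 0" using N[OF tN] pa by simp
        then have "eta * max (U (pt t) s b) 0 \<le> eta * max (U (pt t) s a) 0" using e by (intro mult_left_mono) auto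
        then have eab: "eb \<le> ea" unfolding ea_def eb_def by simp
        have eap: "0 < ea" unfolding ea_def by simp
        have ratio: "pt (Suc t) s b * (pt t s a * ea) = pt (Suc t) s a * (pt t s b * eb)"
          unfolding ea_def eb_def ptS by (rule step_ratio)
        have y: "0 < pt (Suc t) s a" and u: "0 < pt t s a" and v: "0 < pt t s b" and x: "0 < pt (Suc t) s b"
          by (rule fs_pos[OF fs])+
        have "pt (Suc t) s a * (pt t s b * eb) \<le> pt (Suc t) s a * (pt t s b * ea)"
          using y v eab by (intro mult_left_mono) auto
        then have "(pt (Suc t) s b * pt t s a) * ea \<le> (pt (Suc t) s a * pt t s b) * ea"
          using ratio by (simp add: mult_ac)
        then have "pt (Suc t) s b * pt t s a \<le> pt (Suc t) s a * pt t s b"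
          using eap by simp
        then show ?thesis unfolding q_def using y u by (simp add: field_simps)
      qed
      have qb: "q t \<le> q N" if "N \<le> t" for t
        using that
      proof (induction rule: dec_induct)
        case base then show ?case by simp
      next
        case (step n) then show ?case using qdec[of n] by simp
      qed
      have ub: "pt t s b \<le> q N * pt t s a" if "N \<le> t" for t
      proof -
        have u: "0 < pt t s a" by (rule fs_pos[OF fs])
        have "pt t s b = q t * pt t s a" unfolding q_def using u by simp
        then show ?thesis using qb[OF that] u by (simp add: mult_right_mono)
      qed
      show ?thesis
      proof (rule tendsto_sandwich[where f="\<lambda>t. 0" and h="\<lambda>t. q N * pt t s a"])
        show "\<forall>\<^sub>F t in sequentially. 0 \<le> pt t s b"
          by (rule always_eventually, rule allI, rule less_imp_le, rule fs_pos[OF fs])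
        show "\<forall>\<^sub>F t in sequentially. pt t s b \<le> q N * pt t s a"
          unfolding eventually_sequentially using ub by blast
        show "(\<lambda>t. 0::real) \<longlonglongrightarrow> 0" by simp
        show "(\<lambda>t. q N * pt t s a) \<longlonglongrightarrow> 0" by (rule tendsto_mult_right_zero[OF key1[OF pa]])
      qed
    qed
    have "(\<lambda>t. \<Sum>b\<in>UNIV. pt t s b) \<longlonglongrightarrow> 0" by (rule tendsto_null_sum) (rule allb)
    moreover have "(\<Sum>b\<in>UNIV. pt t s b) = 1" for t by (rule pol_sum[OF pp])
    ultimately have "(\<lambda>t. 1::real) \<longlonglongrightarrow> 0" by simp
    then have "(1::real) = 0" by (simp only: LIMSEQ_const_iff)
    then show False by simp
  qed
  have Leq: "L x = V ps x" for x
  proof -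
    have eqt: "V ps x - V (pt t) x = (\<Sum>y\<in>UNIV. W ps (\<lambda>y. if y = x then 1 else 0) y * (\<Sum>a\<in>UNIV. ps y a * U (pt t) y a))" for t
    proof -
      have "(\<Sum>y\<in>UNIV. (if y = x then 1 else 0) * (V ps y - V (pt t) y)) = (\<Sum>y\<in>UNIV. W ps (\<lambda>y. if y = x then 1 else 0) y * (\<Sum>a\<in>UNIV. ps y a * U (pt t) y a))"
        by (rule pdl[OF pp psp delta_distr])
      then show ?thesis by (simp only: sum_delta_mult)
    qed
    have l1: "(\<lambda>t. V ps x - V (pt t) x) \<longlonglongrightarrow> V ps x - L x" by (intro tendsto_intros VL)
    have l2: "(\<lambda>t. V ps x - V (pt t) x) \<longlonglongrightarrow> (\<Sum>y\<in>UNIV. W ps (\<lambda>y. if y = x then 1 else 0) y * (\<Sum>a\<in>UNIV. ps y a * UL y a))"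
      unfolding eqt by (intro tendsto_intros ULlim)
    have "V ps x - L x = (\<Sum>y\<in>UNIV. W ps (\<lambda>y. if y = x then 1 else 0) y * (\<Sum>a\<in>UNIV. ps y a * UL y a))"
      by (rule LIMSEQ_unique[OF l1 l2])
    also have "\<dots> \<le> 0"
    proof (rule sum_nonpos, rule mult_nonneg_nonpos)
      fix y
      show "0 \<le> W ps (\<lambda>y. if y = x then 1 else 0) y" by (rule W_nonneg[OF psp delta_distr])
      show "(\<Sum>a\<in>UNIV. ps y a * UL y a) \<le> 0"
        by (rule sum_nonpos, rule mult_nonneg_nonpos[OF pol_nonneg[OF psp] key2])
    qed
    finally have h1: "V ps x \<le> L x" by simp
    have h2: "L x \<le> V ps x" by (rule LIMSEQ_le_const2[OF VL]) (use Vle in blast)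
    show ?thesis using h1 h2 by simp
  qed
  have Ulim: "(\<lambda>t. U (pt t) s a) \<longlonglongrightarrow> U ps s a" for s a
  proof -
    have "UL s a = U ps s a" unfolding UL_def adv_def Qfun_def using Leq by simp
    then show ?thesis using ULlim[of s a] by simp
  qed
  obtain astar where ast: "\<And>s a. ps s a = (if a = astar s then 1 else 0)"
    and ast0: "\<And>s. U ps s (astar s) = 0" and astn: "\<And>s b. b \<noteq> astar s \<Longrightarrow> U ps s b < 0"
    using pistar_struct[OF opt uniq] by blast
  have key4s: "\<forall>\<^sub>F t in sequentially. 1/2 < pt t s (astar s)" for s
  proof -
    define a0 where "a0 = astar s"
    define R where "R = UNIV - {a0}"
    have evneg: "\<forall>\<^sub>F t in sequentially. \<forall>b\<in>R. U (pt t) s b < 0"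
    proof (rule eventually_ball_finite)
      show "finite R" by simp
      show "\<forall>b\<in>R. \<forall>\<^sub>F t in sequentially. U (pt t) s b < 0"
      proof
        fix b assume "b \<in> R"
        then have "b \<noteq> astar s" unfolding R_def a0_def by simp
        then show "\<forall>\<^sub>F t in sequentially. U (pt t) s b < 0"
          by (intro order_tendstoD(2)[OF Ulim] astn)
      qed
    qed
    have iden: "pt t s a0 * U (pt t) s a0 = (\<Sum>b\<in>R. pt t s b * (- U (pt t) s b))" for t
    proof -
      have "(\<Sum>b\<in>UNIV. pt t s b * U (pt t) s b) = pt t s a0 * U (pt t) s a0 + (\<Sum>b\<in>R. pt t s b * U (pt t) s b)"
        unfolding R_def by (rule sum.remove) auto
      then show ?thesis using U_sum[OF pp, of t s] by (simp add: sum_negf)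
    qed
    have psum: "pt t s a0 = 1 - (\<Sum>b\<in>R. pt t s b)" for t
    proof -
      have "(\<Sum>b\<in>UNIV. pt t s b) = pt t s a0 + (\<Sum>b\<in>R. pt t s b)"
        unfolding R_def by (rule sum.remove) auto
      then show ?thesis using pol_sum[OF pp, of t s] by simp
    qed
    have Ua0: "(\<lambda>t. U (pt t) s a0) \<longlonglongrightarrow> 0" using Ulim[of s a0] ast0[of s] unfolding a0_def by simp
    have lim0: "(\<lambda>t. pt t s a0 * U (pt t) s a0) \<longlonglongrightarrow> 0"
    proof (rule tendsto_sandwich[where f="\<lambda>t. - \<bar>U (pt t) s a0\<bar>" and h="\<lambda>t. \<bar>U (pt t) s a0\<bar>"])
      have bd: "\<bar>pt t s a0 * U (pt t) s a0\<bar> \<le> \<bar>U (pt t) s a0\<bar>" for t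
      proof -
        have "0 \<le> pt t s a0" by (rule pol_nonneg[OF pp])
        moreover have "pt t s a0 \<le> 1" using psum[of t] by (simp add: sum_nonneg pol_nonneg[OF pp])
        ultimately show ?thesis by (simp add: abs_mult mult_left_le_one_le)
      qed
      have "- \<bar>U (pt t) s a0\<bar> \<le> pt t s a0 * U (pt t) s a0 \<and> pt t s a0 * U (pt t) s a0 \<le> \<bar>U (pt t) s a0\<bar>" for t
        using bd[of t] by (simp add: abs_le_iff)
      then show "\<forall>\<^sub>F t in sequentially. - \<bar>U (pt t) s a0\<bar> \<le> pt t s a0 * U (pt t) s a0"
        and "\<forall>\<^sub>F t in sequentially. pt t s a0 * U (pt t) s a0 \<le> \<bar>U (pt t) s a0\<bar>" by auto
      show "(\<lambda>t. - \<bar>U (pt t) s a0\<bar>) \<longlonglongrightarrow> 0" using tendsto_minus[OF tendsto_rabs[OF Ua0]] by simp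
      show "(\<lambda>t. \<bar>U (pt t) s a0\<bar>) \<longlonglongrightarrow> 0" using tendsto_rabs[OF Ua0] by simp
    qed
    have limb: "(\<lambda>t. pt t s b) \<longlonglongrightarrow> 0" if bR: "b \<in> R" for b
    proof -
      have bn: "b \<noteq> astar s" using bR unfolding R_def a0_def by simp
      have l1: "(\<lambda>t. pt t s b * (- U (pt t) s b)) \<longlonglongrightarrow> 0"
      proof (rule tendsto_sandwich[where f="\<lambda>t. 0" and h="\<lambda>t. pt t s a0 * U (pt t) s a0"])
        show "\<forall>\<^sub>F t in sequentially. 0 \<le> pt t s b * (- U (pt t) s b)"
          using evneg
        proof eventually_elim
          case (elim t)
          then have "U (pt t) s b < 0" using bR by blast
          then show ?case using pol_nonneg[OF pp, of t s b] by (simp add: mult_nonneg_nonpos)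
        qed
        show "\<forall>\<^sub>F t in sequentially. pt t s b * (- U (pt t) s b) \<le> pt t s a0 * U (pt t) s a0"
          using evneg
        proof eventually_elim
          case (elim t)
          have nn: "0 \<le> pt t s c * (- U (pt t) s c)" if "c \<in> R" for c
          proof -
            have "U (pt t) s c < 0" using elim that by blast
            then show ?thesis using pol_nonneg[OF pp, of t s c] by (simp add: mult_nonneg_nonpos)
          qed
          have "pt t s b * (- U (pt t) s b) \<le> (\<Sum>c\<in>R. pt t s c * (- U (pt t) s c))"
            by (rule member_le_sum) (use bR nn in auto)
          then show ?case using iden[of t] by simp
        qed
        show "(\<lambda>t. 0::real) \<longlonglongrightarrow> 0" by simp
        show "(\<lambda>t. pt t s a0 * U (pt t) s a0) \<longlonglongrightarrow> 0" by (rule lim0)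
      qed
      have nz: "- U ps s b \<noteq> 0" using astn[OF bn] by simp
      have l2: "(\<lambda>t. pt t s b * (- U (pt t) s b) / (- U (pt t) s b)) \<longlonglongrightarrow> 0 / (- U ps s b)"
        by (rule tendsto_divide[OF l1 tendsto_minus[OF Ulim] nz])
      show ?thesis
      proof (rule Lim_transform_eventually)
        show "(\<lambda>t. pt t s b * (- U (pt t) s b) / (- U (pt t) s b)) \<longlonglongrightarrow> 0" using l2 by simp
        show "\<forall>\<^sub>F t in sequentially. pt t s b * (- U (pt t) s b) / (- U (pt t) s b) = pt t s b"
          using evneg
        proof eventually_elim
          case (elim t)
          then have "U (pt t) s b < 0" using bR by blast
          then show ?case by simp
        qed
      qed
    qed
    have "(\<lambda>t. 1 - (\<Sum>b\<in>R. pt t s b)) \<longlonglongrightarrow> 1 - 0"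
      by (intro tendsto_diff tendsto_const tendsto_null_sum limb)
    then have "(\<lambda>t. pt t s a0) \<longlonglongrightarrow> 1" using psum by simp
    then have "\<forall>\<^sub>F t in sequentially. 1/2 < pt t s a0" by (rule order_tendstoD(1)) simp
    then show ?thesis unfolding a0_def .
  qed
  have key4: "\<forall>\<^sub>F t in sequentially. \<forall>s. 1/2 < pt t s (astar s)"
    by (rule eventually_all_finite) (rule key4s)
  obtain N where N: "\<And>t s. N \<le> t \<Longrightarrow> 1/2 < pt t s (astar s)"
    using key4 unfolding eventually_sequentially by blast
  define B where "B = 1/(1-gam)"
  have Bp: "0 < B" unfolding B_def by (rule gam_B)
  define n where "n = real (card (UNIV :: 's set))"
  have np: "0 < n" unfolding n_def by (simp add: finite_UNIV_card_ge_0)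
  define dl where "dl t = Vrho P r gam rho ps - Vrho P r gam rho (pt t)" for t
  have dl_eq: "dl t = (\<Sum>s\<in>UNIV. rho s * (V ps s - V (pt t) s))" for t
    unfolding dl_def Vrho_eq by (simp add: right_diff_distrib sum_subtractf)
  have dnn: "0 \<le> dl t" for t
    unfolding dl_eq using Vle distr_nonneg[OF rho_distr] by (intro sum_nonneg mult_nonneg_nonneg) auto
  have dform: "dl t = (\<Sum>s\<in>UNIV. W ps rho s * U (pt t) s (astar s))" for t
  proof -
    have "dl t = (\<Sum>s\<in>UNIV. W ps rho s * (\<Sum>a\<in>UNIV. ps s a * U (pt t) s a))"
      unfolding dl_eq by (rule pdl[OF pp psp rho_distr])
    also have "\<dots> = (\<Sum>s\<in>UNIV. W ps rho s * U (pt t) s (astar s))"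
    proof (rule sum.cong[OF refl])
      fix s
      have "(\<Sum>a\<in>UNIV. ps s a * U (pt t) s a) = (\<Sum>a\<in>UNIV. (if a = astar s then 1 else 0) * U (pt t) s a)"
        using ast by simp
      also have "\<dots> = U (pt t) s (astar s)" by (rule sum_delta_mult)
      finally show "W ps rho s * (\<Sum>a\<in>UNIV. ps s a * U (pt t) s a) = W ps rho s * U (pt t) s (astar s)" by simp
    qed
    finally show ?thesis .
  qed
  define x where "x t s = max (U (pt t) s (astar s)) 0" for t s
  have x0: "0 \<le> x t s" for t s unfolding x_def by simp
  have dub: "dl t \<le> (\<Sum>s\<in>UNIV. B * x t s)" for t
    unfolding dform
  proof (rule sum_mono)
    fix s
    have w0: "0 \<le> W ps rho s" by (rule W_nonneg[OF psp rho_distr])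
    have wB: "W ps rho s \<le> B" unfolding B_def by (rule W_le[OF psp rho_distr])
    have "W ps rho s * U (pt t) s (astar s) \<le> W ps rho s * x t s"
      unfolding x_def using w0 by (intro mult_left_mono) auto
    also have "\<dots> \<le> B * x t s" using wB x0 by (intro mult_right_mono) auto
    finally show "W ps rho s * U (pt t) s (astar s) \<le> B * x t s" .
  qed
  have dsq: "(dl t)^2 \<le> (n^2 * B^2) * (\<Sum>s\<in>UNIV. (x t s)^2)" for t
  proof -
    define m where "m = Max (range (x t))"
    have xm: "x t s \<le> m" for s unfolding m_def by (rule Max_ge) auto
    have "m \<in> range (x t)" unfolding m_def by (rule Max_in) auto
    then obtain s0 where s0: "m = x t s0" by blast
    have "(\<Sum>s\<in>UNIV. B * x t s) \<le> (\<Sum>s\<in>(UNIV::'s set). B * m)"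
    proof (rule sum_mono)
      fix s
      show "B * x t s \<le> B * m" using xm[of s] Bp by (simp add: mult_left_mono)
    qed
    then have "dl t \<le> (\<Sum>s\<in>(UNIV::'s set). B * m)" using dub[of t] by linarith
    also have "\<dots> = n * B * m" unfolding n_def by simp
    finally have d1: "dl t \<le> n * B * m" .
    have "(dl t)^2 \<le> (n * B * m)^2" by (rule power_mono[OF d1 dnn])
    also have "\<dots> = (n^2 * B^2) * (x t s0)^2" unfolding s0 by (simp add: power_mult_distrib)
    also have "\<dots> \<le> (n^2 * B^2) * (\<Sum>s\<in>UNIV. (x t s)^2)"
      by (rule mult_left_mono, rule member_le_sum) auto
    finally show ?thesis .
  qed
  have dlow: "(dmin * eta / (2 * E)) * (\<Sum>s\<in>UNIV. (x t s)^2) \<le> dl t - dl (Suc t)" if tN: "N \<le> t" for t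
  proof -
    have "(dmin * eta / (2 * E)) * (\<Sum>s\<in>UNIV. (x t s)^2) = (\<Sum>s\<in>UNIV. (dmin * eta / (2 * E)) * (x t s)^2)"
      by (rule sum_distrib_left)
    also have "\<dots> = (\<Sum>s\<in>UNIV. dmin * (eta * (1/2) * (x t s)^2 / E))"
      by (rule sum.cong[OF refl]) (simp add: field_simps)
    also have "\<dots> \<le> (\<Sum>s\<in>UNIV. dmin * Af t s)"
    proof (rule sum_mono)
      fix s
      have "eta * (1/2) * (x t s)^2 / E \<le> eta * pt t s (astar s) * (x t s)^2 / E"
        using N[OF tN, of s] e Ep by (intro divide_right_mono mult_right_mono mult_left_mono) auto
      also have "\<dots> \<le> Af t s" unfolding x_def by (rule Aflow)
      finally show "dmin * (eta * (1/2) * (x t s)^2 / E) \<le> dmin * Af t s"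
        using dpos by (intro mult_left_mono) auto
    qed
    also have "\<dots> \<le> Vrho P r gam rho (pt (Suc t)) - Vrho P r gam rho (pt t)" by (rule impr)
    also have "\<dots> = dl t - dl (Suc t)" unfolding dl_def by simp
    finally show ?thesis .
  qed
  define c where "c = (dmin * eta / (2 * E)) / (n^2 * B^2)"
  have cp: "0 < c" unfolding c_def using dpos e Ep np Bp by simp
  have recur: "dl (Suc t) \<le> dl t - c * (dl t)^2" if tN: "N \<le> t" for t
  proof -
    have K: "0 < n^2 * B^2" using np Bp by simp
    have "c * (dl t)^2 \<le> c * ((n^2 * B^2) * (\<Sum>s\<in>UNIV. (x t s)^2))"
      using cp dsq[of t] by (intro mult_left_mono) auto
    also have "\<dots> = (dmin * eta / (2 * E)) * (\<Sum>s\<in>UNIV. (x t s)^2)"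
      unfolding c_def using K np Bp by (intro cancelK) simp
    also have "\<dots> \<le> dl t - dl (Suc t)" by (rule dlow[OF tN])
    finally show ?thesis by simp
  qed
  show ?thesis
    using cp dnn recur unfolding dl_def pt_def by blast
qed

end


theorem corollary2:
  fixes P :: "'s::finite \<Rightarrow> 'a::finite \<Rightarrow> 's \<Rightarrow> real"
    and r :: "'s \<Rightarrow> 'a \<Rightarrow> real" and gam :: real and rho :: "'s \<Rightarrow> real"
    and pistar :: "'s \<Rightarrow> 'a \<Rightarrow> real" and dmin :: real
  assumes mdp: "is_mdp P r gam rho"
    and opt: "optimal_policy P r gam pistar"
    and uniq: "\<And>pol. optimal_policy P r gam pol \<Longrightarrow> pol = pistar"
    and dmin_pos: "dmin > 0"
    and cover: "\<And>pol s. full_support pol \<Longrightarrow> visit P gam rho pol s \<ge> dmin"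
  shows "\<exists>eta0>0. \<forall>eta. 0 < eta \<and> eta \<le> eta0 \<longrightarrow>
           (\<forall>theta0. (\<lambda>t. Vrho P r gam rho pistar
                          - Vrho P r gam rho (eg_iter P r gam eta (softmax theta0) t))
                      \<in> O(\<lambda>t. 1 / real t))"
proof -
  interpret M: mdpl P r gam rho by unfold_locales (rule mdp)
  show ?thesis
  proof (rule exI[of _ 1], intro conjI allI impI)
    show "(0::real) < 1" by simp
    fix eta :: real and theta0 :: "'s \<Rightarrow> 'a \<Rightarrow> real"
    assume "0 < eta \<and> eta \<le> 1"
    then have e: "0 < eta" by simp
    obtain c N where c: "0 < c"
      and nn: "\<forall>t. 0 \<le> Vrho P r gam rho pistar - Vrho P r gam rho (eg_iter P r gam eta (softmax theta0) t)"
      and rec: "\<forall>t. N \<le> t \<longrightarrow> Vrho P r gam rho pistar - Vrho P r gam rho (eg_iter P r gam eta (softmax theta0) (Suc t))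
        \<le> (Vrho P r gam rho pistar - Vrho P r gam rho (eg_iter P r gam eta (softmax theta0) t))
           - c * (Vrho P r gam rho pistar - Vrho P r gam rho (eg_iter P r gam eta (softmax theta0) t))^2"
      using M.conv_main[OF opt uniq dmin_pos cover e M.softmax_fs] by blast
    show "(\<lambda>t. Vrho P r gam rho pistar - Vrho P r gam rho (eg_iter P r gam eta (softmax theta0) t)) \<in> O(\<lambda>t. 1 / real t)"
      by (rule rate_lemma[OF c]) (use nn rec in auto)
  qed
qed

end
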